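(* Let $n\geq 2$. The structure $\mathbf{D}_{n,<_1,\ldots,<_n}=(D_n,<,<_1,\ldots,<_n)$ is ultrahomogeneous and its age is $\mathcal{PO}_{n,<_1,\ldots,<_n}$. Consequently, $\mathcal{PO}_{n,<_1,\ldots,<_n}$ is a Fra\"iss\'e class and $\mathbf{D}_{n,<_1,\ldots,<_n}$ is its Fra\"iss\'e limit.
   Context: Fix $n\geq 2$ and a set $D_n\subseteq\mathbb{Q}^n$ which is dense in $\mathbb{Q}^n$ (product topology) and such that no two distinct points of $D_n$ share a common coordinate. On $D_n$, $<$ is the product order ($\mathbf{a}<\mathbf{b}$ iff $a_i\leq b_i$ for all $i$ and $\mathbf{a}\neq\mathbf{b}$) and $<_i$ is the $i$th coordinate order ($\mathbf{a}<_i\mathbf{b}$ iff $a_i<b_i$). Structures are in the signature of $n+1$ binary relation symbols; embeddings are injective maps preserving and reflecting each relation, substructures are subsets with the induced relations. An $n$-dimensional partial order with realizers is a structure $(P,<,<_1,\ldots,<_n)$ where $<_1,\ldots,<_n$ are linear (strict) orders on $P$ and $<$ equals $<_1\cap\cdots\cap<_n$ (i.e. $a<b$ iff $a<_ib$ for all $i$). $\mathcal{PO}_{n,<_1,\ldots,<_n}$ is the class of all finite such structures. A structure is ultrahomogeneous if every isomorphism between finite substructures extends to an automorphism. The age of a structure $\mathbf{M}$ is the class of all finite structures in the same signature embeddable in $\mathbf{M}$. A Fra\"iss\'e class is a nonempty class of finite structures satisfying the hereditary property (closed under structures embeddable into members), joint embedding property (any two members embed into a common member) and amalgamation property (for embeddings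 $e:\mathbf{A}\to\mathbf{B}$, $f:\mathbf{A}\to\mathbf{C}$ of members there are a member $\mathbf{D}$ and embeddings $g:\mathbf{B}\to\mathbf{D}$, $h:\mathbf{C}\to\mathbf{D}$ with $g\circ e=h\circ f$); its Fra\"iss\'e limit is the unique (up to isomorphism) countable ultrahomogeneous structure whose age is the class. *)

theory Defs
  imports Main "HOL-Library.Countable_Set" "HOL-Library.Cardinality"
begin

text \<open>For the signature of the paper (n+1 binary symbols) we use 'i = 'n option,
  where None stands for the product order symbol and Some i for the i-th
  coordinate order symbol.\<close>

type_synonym ('a, 'i) struct = "'a set \<times> ('i \<Rightarrow> 'a \<Rightarrow> 'a \<Rightarrow> bool)"

definition carrier :: "('a, 'i) struct \<Rightarrow> 'a set" where
  "carrier A = fst A"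

definition rel :: "('a, 'i) struct \<Rightarrow> 'i \<Rightarrow> 'a \<Rightarrow> 'a \<Rightarrow> bool" where
  "rel A = snd A"

definition embedding :: "('a \<Rightarrow> 'b) \<Rightarrow> ('a, 'i) struct \<Rightarrow> ('b, 'i) struct \<Rightarrow> bool" where
  "embedding f A B \<longleftrightarrow>
     f ` carrier A \<subseteq> carrier B \<and> inj_on f (carrier A) \<and>
     (\<forall>i. \<forall>x\<in>carrier A. \<forall>y\<in>carrier A. rel A i x y \<longleftrightarrow> rel B i (f x) (f y))"

definition partial_iso :: "('a, 'i) struct \<Rightarrow> 'a set \<Rightarrow> 'a set \<Rightarrow> ('a \<Rightarrow> 'a) \<Rightarrow> bool" where
  "partial_iso M X Y h \<longleftrightarrow>
     X \<subseteq> carrier M \<and> Y \<subseteq> carrier M \<and> bij_betw h X Y \<and>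
     (\<forall>i. \<forall>x\<in>X. \<forall>y\<in>X. rel M i x y \<longleftrightarrow> rel M i (h x) (h y))"

definition automorphism :: "('a, 'i) struct \<Rightarrow> ('a \<Rightarrow> 'a) \<Rightarrow> bool" where
  "automorphism M g \<longleftrightarrow> embedding g M M \<and> g ` carrier M = carrier M"

definition ultrahomogeneous :: "('a, 'i) struct \<Rightarrow> bool" where
  "ultrahomogeneous M \<longleftrightarrow>
     (\<forall>X Y h. finite X \<and> partial_iso M X Y h \<longrightarrow>
        (\<exists>g. automorphism M g \<and> (\<forall>x\<in>X. g x = h x)))"

definition in_age :: "('b, 'i) struct \<Rightarrow> ('a, 'i) struct \<Rightarrow> bool" where
  "in_age M A \<longleftrightarrow> finite (carrier A) \<and> (\<exists>f. embedding f A M)"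

definition strict_linear_on :: "'a set \<Rightarrow> ('a \<Rightarrow> 'a \<Rightarrow> bool) \<Rightarrow> bool" where
  "strict_linear_on S R \<longleftrightarrow>
     (\<forall>x\<in>S. \<not> R x x) \<and>
     (\<forall>x\<in>S. \<forall>y\<in>S. \<forall>z\<in>S. R x y \<and> R y z \<longrightarrow> R x z) \<and>
     (\<forall>x\<in>S. \<forall>y\<in>S. x \<noteq> y \<longrightarrow> R x y \<or> R y x)"

text \<open>The class PO_{n,<_1,...,<_n}: finite n-dimensional partial orders with
  realizers, where n = CARD('n).\<close>
definition in_PO :: "('a, 'n option) struct \<Rightarrow> bool" where
  "in_PO A \<longleftrightarrow> finite (carrier A) \<and>
     (\<forall>i. strict_linear_on (carrier A) (rel A (Some i))) \<and>
     (\<forall>x\<in>carrier A. \<forall>y\<in>carrier A. rel A None x y \<longleftrightarrow> (\<forall>i. rel A (Some i) x y))"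

text \<open>Points of Q^n are functions 'n \<Rightarrow> rat.  The structure D_{n,<_1,...,<_n}.\<close>
definition Dstruct :: "('n \<Rightarrow> rat) set \<Rightarrow> ('n \<Rightarrow> rat, 'n option) struct" where
  "Dstruct D = (D, (\<lambda>r a b. case r of
        None \<Rightarrow> (\<forall>i. a i \<le> b i) \<and> a \<noteq> b
      | Some i \<Rightarrow> a i < b i))"

text \<open>Density in Q^n with the product topology: every nonempty basic open box
  meets D.\<close>
definition dense_in_Qn :: "('n \<Rightarrow> rat) set \<Rightarrow> bool" where
  "dense_in_Qn D \<longleftrightarrow>
     (\<forall>lo hi :: 'n \<Rightarrow> rat. (\<forall>i. lo i < hi i) \<longrightarrow>
        (\<exists>d\<in>D. \<forall>i. lo i < d i \<and> d i < hi i))"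

end

theory Submission
  imports Defs
begin

lemma carrier_D[simp]: "carrier (Dstruct D) = D"
  by (simp add: carrier_def Dstruct_def)

lemma rel_D_Some[simp]: "rel (Dstruct D) (Some i) a b = (a i < b i)"
  by (simp add: rel_def Dstruct_def)

lemma rel_D_None: "rel (Dstruct D) None a b = ((\<forall>i. a i \<le> b i) \<and> a \<noteq> b)"
  by (simp add: rel_def Dstruct_def)

lemma relNone:
  assumes nc: "\<forall>a\<in>D. \<forall>b\<in>D. a \<noteq> b \<longrightarrow> (\<forall>i. a i \<noteq> b i)"
    and "a \<in> D" "b \<in> D"
  shows "rel (Dstruct D) None a b \<longleftrightarrow> (\<forall>i. a i < b i)"
proof
  assume "rel (Dstruct D) None a b"
  then have "\<forall>i. a i \<le> b i" "a \<noteq> b" by (auto simp: rel_D_None)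
  with nc assms(2,3) show "\<forall>i. a i < b i" by (metis order_le_neq_trans)
next
  assume h: "\<forall>i. a i < b i"
  then have "a \<noteq> b" by (metis less_irrefl)
  with h show "rel (Dstruct D) None a b" by (auto simp: rel_D_None less_imp_le)
qed

definition good :: "('n \<Rightarrow> rat) set \<Rightarrow> (('n \<Rightarrow> rat) \<times> ('n \<Rightarrow> rat)) set \<Rightarrow> bool" where
  "good D P \<longleftrightarrow> P \<subseteq> D \<times> D \<and> (\<forall>p\<in>P. \<forall>q\<in>P. \<forall>i. fst p i < fst q i \<longleftrightarrow> snd p i < snd q i)"

lemma good_converse: "good D (converse P) = good D P"
proof -
  have "(\<forall>p\<in>P\<inverse>. \<forall>q\<in>P\<inverse>. \<forall>i. fst p i < fst q i \<longleftrightarrow> snd p i < snd q i) \<longleftrightarrow>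
        (\<forall>p\<in>P. \<forall>q\<in>P. \<forall>i. fst p i < fst q i \<longleftrightarrow> snd p i < snd q i)"
    by (auto simp: Ball_def)
  moreover have "P\<inverse> \<subseteq> D \<times> D \<longleftrightarrow> P \<subseteq> D \<times> D" by auto
  ultimately show ?thesis unfolding good_def by simp
qed

lemma ext_forth:
  assumes nc: "\<forall>a\<in>D. \<forall>b\<in>D. a \<noteq> b \<longrightarrow> (\<forall>i. a i \<noteq> b i)"
    and dense: "dense_in_Qn D" and g: "good D P" and fin: "finite P" and aD: "a \<in> D"
  shows "\<exists>b. good D (insert (a,b) P)"
proof (cases "a \<in> fst ` P")
  case True
  then obtain b where "(a,b) \<in> P" by force
  then show ?thesis using g by (metis insert_absorb)
next
  case False
  define L where "L i = (\<lambda>p. snd p i) ` {p\<in>P. fst p i < a i}" for i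
  define U where "U i = (\<lambda>p. snd p i) ` {p\<in>P. a i < fst p i}" for i
  have finL: "finite (L i)" "finite (U i)" for i
    using fin unfolding L_def U_def by auto
  have LU: "l < u" if lL: "l \<in> L i" and uU: "u \<in> U i" for l u i
  proof -
    obtain p where p: "p \<in> P" "fst p i < a i" "l = snd p i" using lL unfolding L_def by blast
    obtain q where q: "q \<in> P" "a i < fst q i" "u = snd q i" using uU unfolding U_def by blast
    have "fst p i < fst q i" using p q by simp
    then show ?thesis using g p q unfolding good_def by auto
  qed
  define lo where "lo i = (if L i = {} then Min (insert 0 (U i)) - 1 else Max (L i))" for i
  define hi where "hi i = (if U i = {} then Max (insert 0 (L i)) + 1 else Min (U i))" for i
  have "lo i < hi i" for i
  proof (cases "L i = {}"; cases "U i = {}")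
    assume a1: "L i \<noteq> {}" "U i \<noteq> {}"
    then have "Max (L i) \<in> L i" "Min (U i) \<in> U i" using finL by auto
    then show ?thesis unfolding lo_def hi_def using LU a1 by simp
  next
    assume a1: "L i = {}" "U i \<noteq> {}"
    have "Min (insert 0 (U i)) \<le> Min (U i)" using finL a1 by simp
    then show ?thesis unfolding lo_def hi_def using a1 by simp
  next
    assume a1: "L i \<noteq> {}" "U i = {}"
    have "Max (L i) \<le> Max (insert 0 (L i))" using finL a1 by simp
    then show ?thesis unfolding lo_def hi_def using a1 by simp
  next
    assume "L i = {}" "U i = {}"
    then show ?thesis unfolding lo_def hi_def by simp
  qed
  then obtain d where dD: "d \<in> D" and d: "\<forall>i. lo i < d i \<and> d i < hi i"
    using dense unfolding dense_in_Qn_def by blast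
  have key: "(a i < fst p i \<longleftrightarrow> d i < snd p i) \<and> (fst p i < a i \<longleftrightarrow> snd p i < d i)"
    if p: "p \<in> P" for p i
  proof -
    have "fst p \<in> D" using g p unfolding good_def by auto
    moreover have "fst p \<noteq> a" using False p by force
    ultimately have ne: "a i \<noteq> fst p i" using nc aD by metis
    show ?thesis
    proof (cases "a i < fst p i")
      case True
      then have "snd p i \<in> U i" using p unfolding U_def by auto
      then have "hi i \<le> snd p i" using finL unfolding hi_def by auto
      then have "d i < snd p i" using d by (meson less_le_trans)
      then show ?thesis using True by auto
    next
      case F: False
      then have lt: "fst p i < a i" using ne by auto
      then have "snd p i \<in> L i" using p unfolding L_def by auto
      then have "snd p i \<le> lo i" using finL unfolding lo_def by auto
      then have "snd p i < d i" using d by (meson le_less_trans)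
      then show ?thesis using lt by auto
    qed
  qed
  have "good D (insert (a,d) P)"
    unfolding good_def
  proof (intro conjI ballI allI)
    show "insert (a, d) P \<subseteq> D \<times> D" using g aD dD unfolding good_def by auto
  next
    fix p q i assume p: "p \<in> insert (a, d) P" and q: "q \<in> insert (a, d) P"
    show "fst p i < fst q i \<longleftrightarrow> snd p i < snd q i"
    proof (cases "p = (a,d)")
      case True
      then show ?thesis
      proof (cases "q = (a,d)")
        case False then have "q \<in> P" using q by simp
        then show ?thesis using key[of q i] True by simp
      qed simp
    next
      case False then have pP: "p \<in> P" using p by simp
      show ?thesis
      proof (cases "q = (a,d)")
        case False then have "q \<in> P" using q by simp
        then show ?thesis using g pP unfolding good_def by blast
      next
        case True then show ?thesis using key[OF pP, of i] by simp
      qed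
    qed
  qed
  then show ?thesis by blast
qed

lemma ext_back:
  assumes nc: "\<forall>a\<in>D. \<forall>b\<in>D. a \<noteq> b \<longrightarrow> (\<forall>i. a i \<noteq> b i)"
    and dense: "dense_in_Qn D" and g: "good D P" and fin: "finite P" and bD: "b \<in> D"
  shows "\<exists>a. good D (insert (a,b) P)"
proof -
  obtain a where "good D (insert (b,a) (converse P))"
    using ext_forth[OF nc dense _ _ bD, of "converse P"] g fin by (auto simp: good_converse)
  moreover have "converse (insert (a,b) P) = insert (b,a) (converse P)" by auto
  ultimately have "good D (converse (insert (a,b) P))" by simp
  then show ?thesis by (auto simp: good_converse)
qed


lemma age_to_PO:
  fixes A :: "('a, 'n option) struct" and D :: "('n \<Rightarrow> rat) set"
  assumes nc: "\<forall>a\<in>D. \<forall>b\<in>D. a \<noteq> b \<longrightarrow> (\<forall>i. a i \<noteq> b i)"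
    and ag: "in_age (Dstruct D) A"
  shows "in_PO A"
proof -
  obtain f where fin: "finite (carrier A)" and emb: "embedding f A (Dstruct D)"
    using ag unfolding in_age_def by blast
  have fD: "x \<in> carrier A \<Longrightarrow> f x \<in> D" for x using emb unfolding embedding_def by auto
  have inj: "inj_on f (carrier A)" using emb unfolding embedding_def by auto
  have relA: "x \<in> carrier A \<Longrightarrow> y \<in> carrier A \<Longrightarrow> rel A r x y \<longleftrightarrow> rel (Dstruct D) r (f x) (f y)" for r x y
    using emb unfolding embedding_def by auto
  have relS: "x \<in> carrier A \<Longrightarrow> y \<in> carrier A \<Longrightarrow> rel A (Some i) x y \<longleftrightarrow> f x i < f y i" for i x y
    using relA by simp
  have lin: "strict_linear_on (carrier A) (rel A (Some i))" for i
    unfolding strict_linear_on_def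
  proof (intro conjI ballI impI)
    fix x assume "x \<in> carrier A" then show "\<not> rel A (Some i) x x" using relS by simp
  next
    fix x y z assume "x \<in> carrier A" "y \<in> carrier A" "z \<in> carrier A"
      "rel A (Some i) x y \<and> rel A (Some i) y z"
    then show "rel A (Some i) x z" using relS by (meson less_trans)
  next
    fix x y assume xy: "x \<in> carrier A" "y \<in> carrier A" "x \<noteq> y"
    then have "f x \<noteq> f y" using inj by (meson inj_on_def)
    then have "f x i \<noteq> f y i" using nc fD xy by blast
    then show "rel A (Some i) x y \<or> rel A (Some i) y x" using relS xy by (meson linorder_neqE)
  qed
  have "rel A None x y \<longleftrightarrow> (\<forall>i. rel A (Some i) x y)" if "x \<in> carrier A" "y \<in> carrier A" for x y
    using relA[OF that, of None] relNone[OF nc fD fD, OF that] relS[OF that] by simp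
  then show ?thesis unfolding in_PO_def using fin lin by blast
qed

lemma PO_to_age:
  fixes A :: "('a, 'n::finite option) struct" and D :: "('n \<Rightarrow> rat) set"
  assumes nc: "\<forall>a\<in>D. \<forall>b\<in>D. a \<noteq> b \<longrightarrow> (\<forall>i. a i \<noteq> b i)"
    and dense: "dense_in_Qn D"
    and po: "in_PO A"
  shows "in_age (Dstruct D) A"
proof -
  define S where "S = carrier A"
  define R where "R i = rel A (Some i)" for i
  have fin: "finite S" using po unfolding in_PO_def S_def by auto
  have lin: "strict_linear_on S (R i)" for i using po unfolding in_PO_def S_def R_def by auto
  have irr: "x \<in> S \<Longrightarrow> \<not> R i x x" for x i using lin[of i] unfolding strict_linear_on_def by blast
  have tr: "x \<in> S \<Longrightarrow> y \<in> S \<Longrightarrow> z \<in> S \<Longrightarrow> R i x y \<Longrightarrow> R i y z \<Longrightarrow> R i x z" for x y z i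
    using lin[of i] unfolding strict_linear_on_def by blast
  have tot: "x \<in> S \<Longrightarrow> y \<in> S \<Longrightarrow> x \<noteq> y \<Longrightarrow> R i x y \<or> R i y x" for x y i
    using lin[of i] unfolding strict_linear_on_def by blast
  define rk where "rk i x = card {y\<in>S. R i y x}" for i x
  have rk_less: "rk i x < rk i y" if xy: "x \<in> S" "y \<in> S" "R i x y" for i x y
  proof -
    have "{z\<in>S. R i z x} \<subset> {z\<in>S. R i z y}"
    proof
      show "{z\<in>S. R i z x} \<subseteq> {z\<in>S. R i z y}" using tr xy by blast
      show "{z\<in>S. R i z x} \<noteq> {z\<in>S. R i z y}" using xy irr by blast
    qed
    then show ?thesis unfolding rk_def using fin by (simp add: psubset_card_mono)
  qed
  have "\<exists>d\<in>D. \<forall>i. of_nat (rk i x) - 1/2 < d i \<and> d i < of_nat (rk i x) + (1/2::rat)" for x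
  proof -
    have "\<forall>i. of_nat (rk i x) - 1/2 < of_nat (rk i x) + (1/2::rat)" by simp
    moreover have "\<forall>lo hi :: 'n \<Rightarrow> rat. (\<forall>i. lo i < hi i) \<longrightarrow> (\<exists>d\<in>D. \<forall>i. lo i < d i \<and> d i < hi i)"
      using dense unfolding dense_in_Qn_def by blast
    ultimately show ?thesis by (rule_tac allE[where x="\<lambda>i. of_nat (rk i x) - 1/2"], simp_all)
  qed
  then obtain f where f: "\<And>x. f x \<in> D" "\<And>x i. of_nat (rk i x) - 1/2 < f x i \<and> f x i < of_nat (rk i x) + (1/2::rat)"
    by metis
  have ord: "f x i < f y i" if "x \<in> S" "y \<in> S" "R i x y" for x y i
  proof -
    have "rk i x + 1 \<le> rk i y" using rk_less[OF that] by simp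
    then have "of_nat (rk i x) + 1 \<le> (of_nat (rk i y) :: rat)" by (metis of_nat_1 of_nat_add of_nat_le_iff)
    then show ?thesis using f(2)[of i x] f(2)[of i y] by linarith
  qed
  have iff: "R i x y \<longleftrightarrow> f x i < f y i" if xy: "x \<in> S" "y \<in> S" for x y i
  proof
    assume "R i x y" then show "f x i < f y i" using ord xy by blast
  next
    assume lt: "f x i < f y i"
    show "R i x y"
    proof (rule ccontr)
      assume nR: "\<not> R i x y"
      show False
      proof (cases "x = y")
        case True then show False using lt by simp
      next
        case False then have "R i y x" using tot xy nR by blast
        then show False using ord xy lt by (meson less_asym)
      qed
    qed
  qed
  have inj: "inj_on f S"
  proof (rule inj_onI)
    fix x y assume xy: "x \<in> S" "y \<in> S" "f x = f y"
    show "x = y"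
    proof (rule ccontr)
      assume "x \<noteq> y"
      then have "R undefined x y \<or> R undefined y x" using tot xy by blast
      then show False using iff xy by auto
    qed
  qed
  have rel: "rel A r x y \<longleftrightarrow> rel (Dstruct D) r (f x) (f y)" if xy: "x \<in> S" "y \<in> S" for r x y
  proof (cases r)
    case None
    have "rel A None x y \<longleftrightarrow> (\<forall>i. R i x y)" using po xy unfolding in_PO_def S_def R_def by blast
    also have "\<dots> \<longleftrightarrow> (\<forall>i. f x i < f y i)" using iff xy by blast
    also have "\<dots> \<longleftrightarrow> rel (Dstruct D) None (f x) (f y)" using relNone[OF nc f(1) f(1)] by simp
    finally show ?thesis using None by simp
  next
    case (Some i)
    then show ?thesis using iff[OF xy, of i] unfolding R_def by simp
  qed
  have "embedding f A (Dstruct D)" unfolding embedding_def using f(1) inj rel unfolding S_def by auto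
  then show ?thesis unfolding in_age_def using fin S_def by blast
qed

lemma HP:
  fixes A :: "('a, 'n option) struct" and B :: "('b, 'n option) struct"
  assumes po: "in_PO B" and fin: "finite (carrier A)" and emb: "embedding f A B"
  shows "in_PO A"
proof -
  have fB: "x \<in> carrier A \<Longrightarrow> f x \<in> carrier B" for x using emb unfolding embedding_def by auto
  have inj: "inj_on f (carrier A)" using emb unfolding embedding_def by auto
  have relA: "x \<in> carrier A \<Longrightarrow> y \<in> carrier A \<Longrightarrow> rel A r x y \<longleftrightarrow> rel B r (f x) (f y)" for r x y
    using emb unfolding embedding_def by auto
  have lin: "strict_linear_on (carrier A) (rel A (Some i))" for i
  proof -
    have L: "strict_linear_on (carrier B) (rel B (Some i))" using po unfolding in_PO_def by auto
    show ?thesis unfolding strict_linear_on_def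
    proof (intro conjI ballI impI)
      fix x assume "x \<in> carrier A" then show "\<not> rel A (Some i) x x"
        using relA fB L unfolding strict_linear_on_def by blast
    next
      fix x y z assume "x \<in> carrier A" "y \<in> carrier A" "z \<in> carrier A"
        "rel A (Some i) x y \<and> rel A (Some i) y z"
      then show "rel A (Some i) x z" using relA fB L unfolding strict_linear_on_def by meson
    next
      fix x y assume xy: "x \<in> carrier A" "y \<in> carrier A" "x \<noteq> y"
      then have "f x \<noteq> f y" using inj by (meson inj_on_def)
      then show "rel A (Some i) x y \<or> rel A (Some i) y x"
        using relA fB L xy unfolding strict_linear_on_def by meson
    qed
  qed
  have "rel A None x y \<longleftrightarrow> (\<forall>i. rel A (Some i) x y)" if "x \<in> carrier A" "y \<in> carrier A" for x y
    using relA[OF that] fB[OF that(1)] fB[OF that(2)] po unfolding in_PO_def by blast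
  then show ?thesis unfolding in_PO_def using fin lin by blast
qed


lemma ultra:
  fixes D :: "('n::finite \<Rightarrow> rat) set"
  assumes nc: "\<forall>a\<in>D. \<forall>b\<in>D. a \<noteq> b \<longrightarrow> (\<forall>i. a i \<noteq> b i)"
    and dense: "dense_in_Qn D"
  shows "ultrahomogeneous (Dstruct D)"
  unfolding ultrahomogeneous_def
proof (intro allI impI, elim conjE)
  fix X Y h assume finX: "finite X" and pi: "partial_iso (Dstruct D) X Y h"
  have XD: "X \<subseteq> D" and hD: "\<And>x. x \<in> X \<Longrightarrow> h x \<in> D"
    using pi unfolding partial_iso_def bij_betw_def by auto
  have hord: "\<And>x y i. x \<in> X \<Longrightarrow> y \<in> X \<Longrightarrow> x i < y i \<longleftrightarrow> h x i < h y i"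
    using pi unfolding partial_iso_def by (metis rel_D_Some)
  define P0 where "P0 = (\<lambda>x. (x, h x)) ` X"
  have g0: "good D P0" unfolding good_def P0_def using XD hD hord by auto
  have f0: "finite P0" unfolding P0_def using finX by simp
  have cD: "countable D" by (rule countable_subset[OF subset_UNIV]) simp
  have "\<forall>lo hi :: 'n \<Rightarrow> rat. (\<forall>i. lo i < hi i) \<longrightarrow> (\<exists>d\<in>D. \<forall>i. lo i < d i \<and> d i < hi i)"
    using dense unfolding dense_in_Qn_def by blast
  from this[rule_format, of "\<lambda>i. 0" "\<lambda>i. 1"] obtain d0 where "d0 \<in> D" by auto
  then have ne: "D \<noteq> {}" by auto
  define e where "e = from_nat_into D"
  have eD: "e k \<in> D" for k unfolding e_def using from_nat_into[OF ne] .
  have esurj: "\<exists>k. e k = x" if "x \<in> D" for x unfolding e_def using from_nat_into_surj[OF cD that] .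
  define fw where "fw a P = (SOME b. good D (insert (a,b) P))" for a P
  define bw where "bw b P = (SOME a. good D (insert (a,b) P))" for b P
  define step where "step k P = (let P1 = insert (e k, fw (e k) P) P in insert (bw (e k) P1, e k) P1)" for k P
  have stepI: "good D (step k P) \<and> finite (step k P) \<and> P \<subseteq> step k P \<and> e k \<in> fst ` step k P \<and> e k \<in> snd ` step k P"
    if gP: "good D P" and fP: "finite P" for k P
  proof -
    define P1 where "P1 = insert (e k, fw (e k) P) P"
    have g1: "good D P1" unfolding P1_def fw_def
      using someI_ex[OF ext_forth[OF nc dense gP fP eD]] .
    have f1: "finite P1" unfolding P1_def using fP by simp
    have g2: "good D (insert (bw (e k) P1, e k) P1)" unfolding bw_def
      using someI_ex[OF ext_back[OF nc dense g1 f1 eD]] .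
    have "step k P = insert (bw (e k) P1, e k) P1" unfolding step_def P1_def Let_def by simp
    then show ?thesis using g2 f1 unfolding P1_def by (auto simp: image_iff)
  qed
  define Ps where "Ps = rec_nat P0 step"
  have Ps0: "Ps 0 = P0" and PsS: "Ps (Suc k) = step k (Ps k)" for k by (simp_all add: Ps_def)
  have inv: "good D (Ps k) \<and> finite (Ps k)" for k
    by (induction k) (use g0 f0 stepI in \<open>auto simp: Ps0 PsS\<close>)
  have sub: "Ps k \<subseteq> Ps (Suc k)" for k using stepI inv PsS by metis
  have mono: "Ps m \<subseteq> Ps k" if "m \<le> k" for m k using lift_Suc_mono_le[of Ps, OF sub that] .
  define Q where "Q = (\<Union>k. Ps k)"
  have QD: "Q \<subseteq> D \<times> D" unfolding Q_def using inv unfolding good_def by blast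
  have gQ: "fst p i < fst q i \<longleftrightarrow> snd p i < snd q i" if pq: "p \<in> Q" "q \<in> Q" for p q i
  proof -
    obtain m k where "p \<in> Ps m" "q \<in> Ps k" using pq unfolding Q_def by blast
    then have "p \<in> Ps (max m k)" "q \<in> Ps (max m k)" using mono by (meson max.cobounded1 max.cobounded2 subsetD)+
    then show ?thesis using inv unfolding good_def by blast
  qed
  have funQ: "y = y'" if "(x,y) \<in> Q" "(x,y') \<in> Q" for x y y'
  proof
    fix i have "\<not> y i < y' i" "\<not> y' i < y i" using gQ[OF that(1) that(2), of i] gQ[OF that(2) that(1), of i]
      by simp_all
    then show "y i = y' i" by linarith
  qed
  have injQ: "x = x'" if "(x,y) \<in> Q" "(x',y) \<in> Q" for x x' y
  proof
    fix i have "\<not> x i < x' i" "\<not> x' i < x i" using gQ[OF that(1) that(2), of i] gQ[OF that(2) that(1), of i]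
      by simp_all
    then show "x i = x' i" by linarith
  qed
  have domQ: "\<exists>y. (x,y) \<in> Q" if "x \<in> D" for x
  proof -
    obtain k where "e k = x" using esurj \<open>x \<in> D\<close> by blast
    then have "x \<in> fst ` Ps (Suc k)" using stepI inv PsS by metis
    then show ?thesis unfolding Q_def by force
  qed
  have ranQ: "\<exists>x. (x,y) \<in> Q" if "y \<in> D" for y
  proof -
    obtain k where "e k = y" using esurj \<open>y \<in> D\<close> by blast
    then have "y \<in> snd ` Ps (Suc k)" using stepI inv PsS by metis
    then show ?thesis unfolding Q_def by force
  qed
  define g where "g x = (SOME y. (x,y) \<in> Q)" for x
  have gQ': "(x, g x) \<in> Q" if "x \<in> D" for x unfolding g_def using someI_ex[OF domQ[OF that]] .
  have gD: "g x \<in> D" if "x \<in> D" for x using gQ'[OF that] QD by auto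
  have gord: "x i < y i \<longleftrightarrow> g x i < g y i" if "x \<in> D" "y \<in> D" for x y i
    using gQ[OF gQ'[OF that(1)] gQ'[OF that(2)]] by simp
  have ginj: "inj_on g D"
    by (rule inj_onI) (metis gQ' injQ)
  have gext: "g x = h x" if "x \<in> X" for x
  proof -
    have "(x, h x) \<in> Q" unfolding Q_def using that Ps0 P0_def by blast
    then show ?thesis using funQ gQ' XD that by blast
  qed
  have gsurj: "g ` D = D"
  proof
    show "g ` D \<subseteq> D" using gD by auto
    show "D \<subseteq> g ` D"
    proof
      fix y assume "y \<in> D"
      then obtain x where xy: "(x,y) \<in> Q" using ranQ by blast
      then have "x \<in> D" using QD by auto
      then have "g x = y" using funQ gQ' xy by blast
      then show "y \<in> g ` D" using \<open>x \<in> D\<close> by blast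
    qed
  qed
  have grel: "rel (Dstruct D) r x y \<longleftrightarrow> rel (Dstruct D) r (g x) (g y)" if "x \<in> D" "y \<in> D" for r x y
  proof (cases r)
    case None
    then show ?thesis using relNone[OF nc that] relNone[OF nc gD[OF that(1)] gD[OF that(2)]] gord[OF that]
      by simp
  next
    case (Some i) then show ?thesis using gord[OF that] by simp
  qed
  have "automorphism (Dstruct D) g"
    unfolding automorphism_def embedding_def using gD ginj gsurj grel by auto
  then show "\<exists>g. automorphism (Dstruct D) g \<and> (\<forall>x\<in>X. g x = h x)" using gext by blast
qed


definition Cs :: "('n::finite \<Rightarrow> rat) set \<Rightarrow> ('n \<Rightarrow> rat) set \<Rightarrow> (nat, 'n option) struct" where
  "Cs D S = (to_nat ` S, \<lambda>r m m'. rel (Dstruct D) r (from_nat m) (from_nat m'))"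

lemma Cs_PO:
  fixes D :: "('n::finite \<Rightarrow> rat) set"
  assumes nc: "\<forall>a\<in>D. \<forall>b\<in>D. a \<noteq> b \<longrightarrow> (\<forall>i. a i \<noteq> b i)"
    and SD: "S \<subseteq> D" and fS: "finite S"
  shows "in_PO (Cs D S)"
proof (rule age_to_PO[OF nc])
  have c: "carrier (Cs D S) = to_nat ` S" by (simp add: Cs_def carrier_def)
  have r: "rel (Cs D S) r m m' = rel (Dstruct D) r (from_nat m) (from_nat m')" for r m m'
    by (simp add: Cs_def rel_def)
  have "embedding from_nat (Cs D S) (Dstruct D)"
    unfolding embedding_def c r using SD
    by (auto simp: inj_on_def)
  then show "in_age (Dstruct D) (Cs D S)" unfolding in_age_def c using fS by blast
qed

lemma Cs_emb:
  fixes D :: "('n::finite \<Rightarrow> rat) set" and A :: "('a, 'n option) struct"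
  assumes emb: "embedding \<phi> A (Dstruct D)" and sub: "\<phi> ` carrier A \<subseteq> S"
  shows "embedding (to_nat \<circ> \<phi>) A (Cs D S)"
proof -
  have c: "carrier (Cs D S) = to_nat ` S" by (simp add: Cs_def carrier_def)
  have r: "rel (Cs D S) r m m' = rel (Dstruct D) r (from_nat m) (from_nat m')" for r m m'
    by (simp add: Cs_def rel_def)
  show ?thesis unfolding embedding_def c r using emb sub unfolding embedding_def
    by (auto simp: inj_on_def)
qed

lemma emb_comp:
  assumes "embedding f A B" "embedding g B C"
  shows "embedding (g \<circ> f) A C"
  using assms unfolding embedding_def by (auto simp: inj_on_def image_subset_iff)

theorem theorem3p2:
  fixes D :: "('n::finite \<Rightarrow> rat) set"
  assumes n2: "CARD('n) \<ge> 2"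
    and dense: "dense_in_Qn D"
    and nocommon: "\<forall>a\<in>D. \<forall>b\<in>D. a \<noteq> b \<longrightarrow> (\<forall>i. a i \<noteq> b i)"
  shows
    \<comment> \<open>ultrahomogeneity and age\<close>
    "ultrahomogeneous (Dstruct D) \<and>
     (\<forall>A :: ('a, 'n option) struct. in_age (Dstruct D) A \<longleftrightarrow> in_PO A) \<and>
     \<comment> \<open>PO is a Fraisse class: nonempty, HP, JEP, AP\<close>
     (\<exists>A :: (nat, 'n option) struct. in_PO A) \<and>
     (\<forall>(A :: ('a, 'n option) struct) (B :: ('b, 'n option) struct) f.
        in_PO B \<and> finite (carrier A) \<and> embedding f A B \<longrightarrow> in_PO A) \<and>
     (\<forall>(A :: ('a, 'n option) struct) (B :: ('b, 'n option) struct).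
        in_PO A \<and> in_PO B \<longrightarrow>
        (\<exists>(C :: (nat, 'n option) struct) g h. in_PO C \<and> embedding g A C \<and> embedding h B C)) \<and>
     (\<forall>(A :: ('a, 'n option) struct) (B :: ('b, 'n option) struct)
        (C :: ('c, 'n option) struct) e f.
        in_PO A \<and> in_PO B \<and> in_PO C \<and> embedding e A B \<and> embedding f A C \<longrightarrow>
        (\<exists>(E :: (nat, 'n option) struct) g h. in_PO E \<and> embedding g B E \<and> embedding h C E \<and>
            (\<forall>x\<in>carrier A. g (e x) = h (f x)))) \<and>
     \<comment> \<open>D is the Fraisse limit: countable, ultrahomogeneous, with age PO\<close>
     countable (carrier (Dstruct D))"
proof -
  note nc = nocommon
  have U: "ultrahomogeneous (Dstruct D)" using ultra[OF nc dense] .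
  have AG: "in_age (Dstruct D) A \<longleftrightarrow> in_PO A" for A :: "('x, 'n option) struct"
    using age_to_PO[OF nc] PO_to_age[OF nc dense] by blast
  have emb_of: "\<exists>\<alpha>. embedding \<alpha> A (Dstruct D) \<and> finite (carrier A)" if "in_PO A" for A :: "('x, 'n option) struct"
    using PO_to_age[OF nc dense that] unfolding in_age_def by blast
  have embD: "\<alpha> ` carrier A \<subseteq> D" if "embedding \<alpha> A (Dstruct D)" for \<alpha> and A :: "('x, 'n option) struct"
    using that unfolding embedding_def by simp
  have NE: "\<exists>A :: (nat, 'n option) struct. in_PO A"
    by (rule exI[of _ "({}, \<lambda>_ _ _. False)"]) (simp add: in_PO_def carrier_def strict_linear_on_def)
  have JEP: "\<exists>(C :: (nat, 'n option) struct) g h. in_PO C \<and> embedding g A C \<and> embedding h B C"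
    if pA: "in_PO A" and pB: "in_PO B" for A :: "('a, 'n option) struct" and B :: "('b, 'n option) struct"
  proof -
    obtain \<alpha> where \<alpha>: "embedding \<alpha> A (Dstruct D)" "finite (carrier A)" using emb_of pA by blast
    obtain \<beta> where \<beta>: "embedding \<beta> B (Dstruct D)" "finite (carrier B)" using emb_of pB by blast
    define S where "S = \<alpha> ` carrier A \<union> \<beta> ` carrier B"
    have "S \<subseteq> D" "finite S" unfolding S_def using \<alpha> \<beta> embD[OF \<alpha>(1)] embD[OF \<beta>(1)] by auto
    then have "in_PO (Cs D S)" using Cs_PO[OF nc] by blast
    moreover have "embedding (to_nat \<circ> \<alpha>) A (Cs D S)" using Cs_emb[OF \<alpha>(1)] S_def by blast
    moreover have "embedding (to_nat \<circ> \<beta>) B (Cs D S)" using Cs_emb[OF \<beta>(1)] S_def by blast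
    ultimately show ?thesis by blast
  qed
  have AP: "\<exists>(E :: (nat, 'n option) struct) g h. in_PO E \<and> embedding g B E \<and> embedding h C E \<and>
            (\<forall>x\<in>carrier A. g (e x) = h (f x))"
    if pA: "in_PO A" and pB: "in_PO B" and pC: "in_PO C" and e: "embedding e A B" and f: "embedding f A C"
    for A :: "('a, 'n option) struct" and B :: "('b, 'n option) struct" and C :: "('c, 'n option) struct" and e f
  proof -
    obtain \<beta> where \<beta>: "embedding \<beta> B (Dstruct D)" "finite (carrier B)" using emb_of pB by blast
    obtain \<gamma> where \<gamma>: "embedding \<gamma> C (Dstruct D)" "finite (carrier C)" using emb_of pC by blast
    have finA: "finite (carrier A)" using pA unfolding in_PO_def by blast
    define \<phi> where "\<phi> = \<gamma> \<circ> f"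
    define \<psi> where "\<psi> = \<beta> \<circ> e"
    have \<phi>: "embedding \<phi> A (Dstruct D)" unfolding \<phi>_def using emb_comp[OF f \<gamma>(1)] .
    have \<psi>: "embedding \<psi> A (Dstruct D)" unfolding \<psi>_def using emb_comp[OF e \<beta>(1)] .
    define X where "X = \<phi> ` carrier A"
    define Y where "Y = \<psi> ` carrier A"
    define k where "k y = \<psi> (inv_into (carrier A) \<phi> y)" for y
    have injphi: "inj_on \<phi> (carrier A)" using \<phi> unfolding embedding_def by blast
    have injpsi: "inj_on \<psi> (carrier A)" using \<psi> unfolding embedding_def by blast
    have kphi: "k (\<phi> a) = \<psi> a" if "a \<in> carrier A" for a
      unfolding k_def using inv_into_f_f[OF injphi that] by simp
    have "bij_betw k X Y"
    proof -
      have "bij_betw (inv_into (carrier A) \<phi>) X (carrier A)"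
        unfolding X_def using bij_betw_inv_into[OF inj_on_imp_bij_betw[OF injphi]] .
      moreover have "bij_betw \<psi> (carrier A) Y" unfolding Y_def using inj_on_imp_bij_betw[OF injpsi] .
      ultimately have "bij_betw (\<psi> \<circ> inv_into (carrier A) \<phi>) X Y" by (rule bij_betw_trans)
      moreover have "\<psi> \<circ> inv_into (carrier A) \<phi> = k" unfolding k_def by auto
      ultimately show ?thesis by simp
    qed
    moreover have "X \<subseteq> D" "Y \<subseteq> D" unfolding X_def Y_def using embD[OF \<phi>] embD[OF \<psi>] by auto
    moreover have "rel (Dstruct D) r x y \<longleftrightarrow> rel (Dstruct D) r (k x) (k y)" if xX: "x \<in> X" "y \<in> X" for r x y
    proof -
      obtain a b where ab: "a \<in> carrier A" "b \<in> carrier A" "x = \<phi> a" "y = \<phi> b" using xX X_def by blast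
      then show ?thesis using kphi \<phi> \<psi> unfolding embedding_def by simp
    qed
    ultimately have "partial_iso (Dstruct D) X Y k" unfolding partial_iso_def by simp
    moreover have "finite X" unfolding X_def using finA by simp
    ultimately obtain \<sigma> where \<sigma>: "automorphism (Dstruct D) \<sigma>" "\<forall>x\<in>X. \<sigma> x = k x"
      using U unfolding ultrahomogeneous_def by blast
    have \<sigma>\<gamma>: "embedding (\<sigma> \<circ> \<gamma>) C (Dstruct D)" using emb_comp[OF \<gamma>(1)] \<sigma>(1) unfolding automorphism_def by blast
    define S where "S = \<beta> ` carrier B \<union> (\<sigma> \<circ> \<gamma>) ` carrier C"
    have "S \<subseteq> D" "finite S" unfolding S_def using \<beta> \<gamma> embD[OF \<beta>(1)] embD[OF \<sigma>\<gamma>] by auto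
    then have "in_PO (Cs D S)" using Cs_PO[OF nc] by blast
    moreover have "embedding (to_nat \<circ> \<beta>) B (Cs D S)" using Cs_emb[OF \<beta>(1)] S_def by blast
    moreover have "embedding (to_nat \<circ> (\<sigma> \<circ> \<gamma>)) C (Cs D S)" using Cs_emb[OF \<sigma>\<gamma>] S_def by blast
    moreover have "(to_nat \<circ> \<beta>) (e x) = (to_nat \<circ> (\<sigma> \<circ> \<gamma>)) (f x)" if xA: "x \<in> carrier A" for x
    proof -
      have "\<sigma> (\<gamma> (f x)) = \<sigma> (\<phi> x)" unfolding \<phi>_def by simp
      also have "\<dots> = k (\<phi> x)" using \<sigma>(2) xA X_def by blast
      also have "\<dots> = \<psi> x" using kphi xA by blast
      finally show ?thesis unfolding \<psi>_def by simp
    qed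
    ultimately show ?thesis by blast
  qed
  have cnt: "countable (carrier (Dstruct D))" by (simp add: countable_subset[OF subset_UNIV])
  show ?thesis
    apply (intro conjI)
    subgoal by (rule U)
    subgoal using AG by blast
    subgoal by (rule NE)
    subgoal using HP by blast
    subgoal using JEP by blast
    subgoal using AP by blast
    subgoal by (rule cnt)
    done
qed

end
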